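(* Let $d\in\mathbb{N}$, $K=\mathbb{N}_0^d$ or $K=\mathbb{Z}^d$, $(\Omega,\mathcal F,P)$ a probability space with a $d$-parameter semigroup (group if $K=\mathbb{Z}^d$) $(\theta_k)_{k\in K}$ of $P$-preserving transformations. Let $M$ be a compact separable metric space with Borel $\sigma$-algebra $\mathcal B$, $\tau:M\to M$ continuous, and $\mu$ a $\tau$-invariant probability measure on $(M,\mathcal B)$ such that $\mu(U)>0$ for every non-empty open $U\subseteq M$. Let $\kappa:M\to K$ be measurable, $\kappa_n=\sum_{i=0}^{n-1}\kappa\circ\tau^i$, $S(t,\omega)=(\tau(t),\theta_{\kappa(t)}\omega)$, $\bar P=\mu\otimes P$, and $\mathcal J$ the $\sigma$-algebra of $S$-invariant sets in $\mathcal B\otimes\mathcal F$. Let $F$ be a $\mathcal B\otimes\mathcal F$-measurable, $\bar P$-integrable function on $M\times\Omega$ with $F(t,\cdot)\in L^1(P)$ for all $t\in M$, such that for every $\omega\in\Omega$ the sequence of functions $$t\mapsto\frac1n\sum_{i=0}^{n-1}F\big(\tau^i(t),\theta_{\kappa_i(t)}\omega\big),\qquad n\in\mathbb{N},$$ is equicontinuous on $M$. Then for $P$-almost all $\omega\in\Omega$, $$\sup_{t\in M}\Big|\frac1n\sum_{i=0}^{n-1}F\big(\tau^i(t),\theta_{\kappa_i(t)}\omega\big)-\bar E[F\mid\mathcal J](t,\omega)\Big|\to0\quad(n\to\infty).$$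
   Context: A semigroup of measure-preserving transformations: each $\theta_k$ measurable and $P$-preserving, $\theta_0=\mathrm{Id}$, $\theta_k\circ\theta_l=\theta_{k+l}$ (and $\theta_{-k}=\theta_k^{-1}$ in the group case). $\bar E[\cdot\mid\mathcal J]$ is conditional expectation w.r.t. $\bar P$. *)

theory Defs
  imports "HOL-Analysis.Analysis" "HOL-Probability.Probability"
begin

definition measure_preserving_map :: "'a measure \<Rightarrow> ('a \<Rightarrow> 'a) \<Rightarrow> bool" where
  "measure_preserving_map P T \<longleftrightarrow> T \<in> P \<rightarrow>\<^sub>M P \<and> distr P P T = P"

definition invariant_sigma :: "'a measure \<Rightarrow> ('a \<Rightarrow> 'a) \<Rightarrow> 'a measure" where
  "invariant_sigma M S = sigma (space M) {A \<in> sets M. S -` A \<inter> space M = A}"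

definition orthant :: "(int ^ 'd) set" where
  "orthant = {k. \<forall>i. 0 \<le> k $ i}"

definition kappa_sum :: "('m \<Rightarrow> int ^ 'd) \<Rightarrow> ('m \<Rightarrow> 'm) \<Rightarrow> nat \<Rightarrow> 'm \<Rightarrow> int ^ 'd" where
  "kappa_sum \<kappa> \<tau> n t = (\<Sum>i<n. \<kappa> ((\<tau> ^^ i) t))"

definition erg_avg :: "('m \<times> 'a \<Rightarrow> real) \<Rightarrow> ('m \<Rightarrow> 'm) \<Rightarrow> (int ^ 'd \<Rightarrow> 'a \<Rightarrow> 'a)
    \<Rightarrow> ('m \<Rightarrow> int ^ 'd) \<Rightarrow> nat \<Rightarrow> 'm \<Rightarrow> 'a \<Rightarrow> real" where
  "erg_avg F \<tau> \<theta> \<kappa> n t \<omega> =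
     (1 / real n) * (\<Sum>i<n. F ((\<tau> ^^ i) t, \<theta> (kappa_sum \<kappa> \<tau> i t) \<omega>))"

end

theory Submission
  imports Defs
begin

definition bsum :: "('x\<Rightarrow>'x) \<Rightarrow> ('x \<Rightarrow> real) \<Rightarrow> nat \<Rightarrow> 'x \<Rightarrow> real" where
  "bsum T f n x = (\<Sum>i<n. f ((T^^i) x))"

lemma funpow_meas:
  assumes "T \<in> M \<rightarrow>\<^sub>M M"
  shows "(T^^i) \<in> M \<rightarrow>\<^sub>M M"
proof (induction i)
  case (Suc i) then show ?case using measurable_comp[OF Suc assms] by (simp add: comp_def)
qed simp

lemma funpow_distr:
  assumes "T \<in> M \<rightarrow>\<^sub>M M" "distr M M T = M"
  shows "distr M M (T^^i) = M"
proof (induction i)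
  case 0 then show ?case by (simp add: distr_id2)
next
  case (Suc i)
  have "distr M M (T^^Suc i) = distr M M ((T^^i) \<circ> T)" by (simp only: funpow_Suc_right)
  also have "\<dots> = distr (distr M M T) M (T^^i)"
    by (rule distr_distr[symmetric]) (auto intro: funpow_meas assms)
  also have "\<dots> = M" using Suc assms by simp
  finally show ?case .
qed

lemma funpow_space:
  assumes "T \<in> M \<rightarrow>\<^sub>M M" "x \<in> space M"
  shows "(T^^i) x \<in> space M"
  using measurable_space[OF funpow_meas[OF assms(1)] assms(2)] .

lemma integrable_funpow:
  fixes f :: "_ \<Rightarrow> real"
  assumes "T \<in> M \<rightarrow>\<^sub>M M" "distr M M T = M" "integrable M f"
  shows "integrable M (\<lambda>x. f ((T^^i) x))"
proof -
  have "integrable (distr M M (T^^i)) f" using assms funpow_distr[OF assms(1,2)] by simp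
  then show ?thesis
    using integrable_distr_eq[OF funpow_meas[OF assms(1)], of f] assms(3) by auto
qed

lemma integral_funpow:
  fixes f :: "_ \<Rightarrow> real"
  assumes "T \<in> M \<rightarrow>\<^sub>M M" "distr M M T = M" "f \<in> borel_measurable M"
  shows "(\<integral>x. f ((T^^i) x) \<partial>M) = (\<integral>x. f x \<partial>M)"
proof -
  have "(\<integral>x. f ((T^^i) x) \<partial>M) = integral\<^sup>L (distr M M (T^^i)) f"
    by (rule integral_distr[symmetric]) (auto intro: funpow_meas assms)
  then show ?thesis using funpow_distr[OF assms(1,2)] by simp
qed

lemma bsum_meas:
  assumes "T \<in> M \<rightarrow>\<^sub>M M" "f \<in> borel_measurable M"
  shows "bsum T f n \<in> borel_measurable M"
  unfolding bsum_def
  by (intro borel_measurable_sum measurable_compose[OF funpow_meas[OF assms(1)] assms(2)])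

lemma bsum_int:
  assumes "T \<in> M \<rightarrow>\<^sub>M M" "distr M M T = M" "integrable M f"
  shows "integrable M (bsum T f n)"
  unfolding bsum_def[abs_def] using integrable_funpow[OF assms] by auto

lemma bsum_Suc: "bsum T f (Suc n) x = f x + bsum T f n (T x)"
  unfolding bsum_def sum.lessThan_Suc_shift
  by (simp only: funpow_Suc_right comp_def funpow_0 id_apply)

lemma bsum_0[simp]: "bsum T f 0 x = 0" by (simp add: bsum_def)

primrec mx :: "('x\<Rightarrow>'x) \<Rightarrow> ('x \<Rightarrow> real) \<Rightarrow> nat \<Rightarrow> 'x \<Rightarrow> real" where
  "mx T f 0 x = 0"
| "mx T f (Suc n) x = max (mx T f n x) (bsum T f (Suc n) x)"

lemma mx_ge: "k \<le> n \<Longrightarrow> bsum T f k x \<le> mx T f n x"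
proof (induction n)
  case 0 then show ?case by simp
next
  case (Suc n) then show ?case by (cases "k = Suc n") (auto simp: le_Suc_eq)
qed

lemma mx_in: "\<exists>k\<le>n. mx T f n x = bsum T f k x"
proof (induction n)
  case 0 then show ?case by (intro exI[of _ 0]) simp
next
  case (Suc n)
  then obtain k where "k \<le> n" "mx T f n x = bsum T f k x" by auto
  show ?case
  proof (cases "mx T f n x \<le> bsum T f (Suc n) x")
    case True then show ?thesis by (intro exI[of _ "Suc n"]) (simp add: max_def)
  next
    case False then show ?thesis using \<open>k \<le> n\<close> \<open>mx T f n x = bsum T f k x\<close>
      by (intro exI[of _ k]) (simp add: max_def)
  qed
qed

lemma mx_nonneg: "0 \<le> mx T f n x"
  using mx_ge[of 0 n T f x] by simp

lemma mx_int:
  assumes "T \<in> M \<rightarrow>\<^sub>M M" "distr M M T = M" "integrable M f"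
  shows "integrable M (mx T f n)"
proof (induction n)
  case 0 then show ?case by simp
next
  case (Suc n)
  have "integrable M (\<lambda>x. max (mx T f n x) (bsum T f (Suc n) x))"
    by (intro integrable_max Suc bsum_int[OF assms])
  then show ?case by simp
qed

lemma maximal:
  fixes f :: "_ \<Rightarrow> real"
  assumes T: "T \<in> M \<rightarrow>\<^sub>M M" "distr M M T = M" and f: "integrable M f"
  shows "0 \<le> (\<integral>x. indicator {x\<in>space M. 0 < mx T f n x} x * f x \<partial>M)"
proof -
  have im: "integrable M (mx T f n)" by (rule mx_int[OF assms])
  have imT: "integrable M (\<lambda>x. mx T f n (T x))"
    using integrable_funpow[OF T im, of 1] by simp
  have meas: "mx T f n \<in> borel_measurable M" using im by (rule borel_measurable_integrable)
  have key: "mx T f n x \<le> f x + mx T f n (T x)" if pos: "0 < mx T f n x" for x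
  proof -
    obtain k where k: "k \<le> n" "mx T f n x = bsum T f k x" using mx_in[of n T f x] by blast
    then obtain j where j: "k = Suc j" using pos by (cases k) auto
    have "bsum T f k x = f x + bsum T f j (T x)" using j bsum_Suc by simp
    also have "\<dots> \<le> f x + mx T f n (T x)" using mx_ge[of j n T f "T x"] j k by simp
    finally show ?thesis using k by simp
  qed
  have pt: "mx T f n x - mx T f n (T x) \<le> indicator {x\<in>space M. 0 < mx T f n x} x * f x"
    if "x \<in> space M" for x
  proof (cases "0 < mx T f n x")
    case True then show ?thesis using key[OF True] that by simp
  next
    case False
    then have "mx T f n x = 0" using mx_nonneg[of T f n x] by simp
    then show ?thesis using False mx_nonneg[of T f n "T x"] by simp
  qed
  have S: "{x\<in>space M. 0 < mx T f n x} \<in> sets M" using meas unfolding borel_measurable_iff_greater by blast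
  have "0 = (\<integral>x. mx T f n x \<partial>M) - (\<integral>x. mx T f n (T x) \<partial>M)"
    using integral_funpow[OF T meas, of 1] by simp
  also have "\<dots> = (\<integral>x. mx T f n x - mx T f n (T x) \<partial>M)"
    using im imT by simp
  also have "\<dots> \<le> (\<integral>x. indicator {x\<in>space M. 0 < mx T f n x} x * f x \<partial>M)"
    using Bochner_Integration.integrable_diff[OF im imT] integrable_mult_indicator[OF S f] pt by (intro integral_mono) auto
  finally show ?thesis .
qed

lemma maximal2:
  fixes f :: "_ \<Rightarrow> real"
  assumes T: "T \<in> M \<rightarrow>\<^sub>M M" "distr M M T = M" and f: "integrable M f"
    and pos: "\<And>x. x \<in> space M \<Longrightarrow> f x \<noteq> 0 \<Longrightarrow> \<exists>n. 0 < bsum T f n x"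
  shows "0 \<le> (\<integral>x. f x \<partial>M)"
proof -
  have meas: "\<And>n. mx T f n \<in> borel_measurable M" using mx_int[OF assms(1-3)] by auto
  have fm: "f \<in> borel_measurable M" using f by auto
  have "(\<lambda>n. \<integral>x. indicator {x\<in>space M. 0 < mx T f n x} x * f x \<partial>M) \<longlonglongrightarrow> (\<integral>x. f x \<partial>M)"
  proof (rule integral_dominated_convergence[where w="\<lambda>x. norm (f x)"])
    show "f \<in> borel_measurable M" by fact
    show "\<And>n. (\<lambda>x. indicator {x\<in>space M. 0 < mx T f n x} x * f x) \<in> borel_measurable M"
      using meas fm by measurable
    show "integrable M (\<lambda>x. norm (f x))" using f by auto
    show "\<And>n. AE x in M. norm (indicator {x\<in>space M. 0 < mx T f n x} x * f x) \<le> norm (f x)"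
      by (auto simp: indicator_def)
    show "AE x in M. (\<lambda>n. indicator {x\<in>space M. 0 < mx T f n x} x * f x) \<longlonglongrightarrow> f x"
    proof (rule AE_I2)
      fix x assume x: "x \<in> space M"
      show "(\<lambda>n. indicator {x\<in>space M. 0 < mx T f n x} x * f x) \<longlonglongrightarrow> f x"
      proof (cases "f x = 0")
        case True then show ?thesis by simp
      next
        case False
        then obtain n0 where n0: "0 < bsum T f n0 x" using pos x by blast
        have "eventually (\<lambda>n. indicator {x\<in>space M. 0 < mx T f n x} x * f x = f x) sequentially"
          unfolding eventually_sequentially
        proof (intro exI allI impI)
          fix n assume "n0 \<le> n"
          then have "0 < mx T f n x" using mx_ge[of n0 n T f x] n0 by simp
          then show "indicator {x\<in>space M. 0 < mx T f n x} x * f x = f x" using x by simp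
        qed
        then show ?thesis by (rule tendsto_eventually)
      qed
    qed
  qed
  then show ?thesis
    by (rule LIMSEQ_le_const) (use maximal[OF assms(1-3)] in auto)
qed

lemma inv_sets:
  assumes T: "T \<in> M \<rightarrow>\<^sub>M M"
  shows "sets (invariant_sigma M T) = {A \<in> sets M. T -` A \<inter> space M = A}"
    and "space (invariant_sigma M T) = space M"
proof -
  let ?G = "{A \<in> sets M. T -` A \<inter> space M = A}"
  have sub: "?G \<subseteq> Pow (space M)" using sets.sets_into_space by auto
  have Tsp: "\<And>x. x \<in> space M \<Longrightarrow> T x \<in> space M" using measurable_space[OF T] .
  have "sigma_algebra (space M) ?G"
    unfolding sigma_algebra_iff2
  proof (intro conjI ballI allI impI)
    show "?G \<subseteq> Pow (space M)" by fact
    show "{} \<in> ?G" by simp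
  next
    fix s assume "s \<in> ?G"
    then show "space M - s \<in> ?G" using Tsp by auto
  next
    fix A :: "nat \<Rightarrow> _" assume "range A \<subseteq> ?G"
    then have "\<And>i. A i \<in> sets M" "\<And>i. T -` A i \<inter> space M = A i" by auto
    moreover have "T -` (\<Union>i. A i) \<inter> space M = (\<Union>i. T -` A i \<inter> space M)" by auto
    ultimately show "(\<Union>i. A i) \<in> ?G" by auto
  qed
  then have "sigma_sets (space M) ?G = ?G" by (rule sigma_algebra.sigma_sets_eq)
  then show "sets (invariant_sigma M T) = ?G"
    unfolding invariant_sigma_def using sets_measure_of[OF sub] by simp
  show "space (invariant_sigma M T) = space M"
    unfolding invariant_sigma_def using space_measure_of[OF sub] by simp
qed

lemma inv_meas_invariant:
  fixes h :: "_ \<Rightarrow> real"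
  assumes T: "T \<in> M \<rightarrow>\<^sub>M M" and h: "h \<in> borel_measurable (invariant_sigma M T)"
    and x: "x \<in> space M"
  shows "h (T x) = h x"
proof -
  have "h -` {h x} \<inter> space (invariant_sigma M T) \<in> sets (invariant_sigma M T)"
    by (rule measurable_sets[OF h]) simp
  then have A: "T -` (h -` {h x} \<inter> space M) \<inter> space M = h -` {h x} \<inter> space M"
    using inv_sets[OF T] by simp
  have "x \<in> T -` (h -` {h x} \<inter> space M) \<inter> space M" using x by (subst A) simp
  then show ?thesis by simp
qed

lemma inv_meas_invariant_pow:
  fixes h :: "_ \<Rightarrow> real"
  assumes T: "T \<in> M \<rightarrow>\<^sub>M M" and h: "h \<in> borel_measurable (invariant_sigma M T)"
    and x: "x \<in> space M"
  shows "h ((T^^i) x) = h x"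
proof (induction i)
  case (Suc i)
  have "h ((T^^Suc i) x) = h (T ((T^^i) x))" by simp
  also have "\<dots> = h ((T^^i) x)" by (rule inv_meas_invariant[OF T h funpow_space[OF T x]])
  finally show ?case using Suc by simp
qed simp

lemma inv_measI:
  fixes g :: "_ \<Rightarrow> real"
  assumes T: "T \<in> M \<rightarrow>\<^sub>M M" and g: "g \<in> borel_measurable M"
    and inv: "\<And>x. x \<in> space M \<Longrightarrow> g (T x) = g x"
  shows "g \<in> borel_measurable (invariant_sigma M T)"
proof (rule measurableI)
  fix A :: "real set" assume A: "A \<in> sets borel"
  have "g -` A \<inter> space M \<in> sets M" using measurable_sets[OF g A] .
  moreover have "T -` (g -` A \<inter> space M) \<inter> space M = g -` A \<inter> space M"
    using inv measurable_space[OF T] by auto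
  ultimately show "g -` A \<inter> space (invariant_sigma M T) \<in> sets (invariant_sigma M T)"
    using inv_sets[OF T] by simp
qed simp

lemma inv_pow_mem:
  assumes T: "T \<in> M \<rightarrow>\<^sub>M M" and D: "T -` D \<inter> space M = D" and x: "x \<in> D"
  shows "(T^^i) x \<in> D"
proof (induction i)
  case (Suc i)
  then have "(T^^i) x \<in> T -` D \<inter> space M" using D by simp
  then show ?case by simp
qed (use x in simp)

lemma integrable_ind_mult:
  fixes f :: "_ \<Rightarrow> real"
  shows "A \<in> sets M \<Longrightarrow> integrable M f \<Longrightarrow> integrable M (\<lambda>x. indicator A x * f x)"
  using integrable_mult_indicator[of A M f] by simp

lemma bsum_diff_const: "bsum T (\<lambda>x. g x - b) n x = bsum T g n x - real n * b"
  unfolding bsum_def by (simp add: sum_subtractf)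

lemma birk0:
  fixes g :: "_ \<Rightarrow> real"
  assumes P: "prob_space M" and T: "T \<in> M \<rightarrow>\<^sub>M M" "distr M M T = M" and g: "integrable M g"
    and zero: "\<And>A. A \<in> sets M \<Longrightarrow> T -` A \<inter> space M = A \<Longrightarrow> (\<integral>x. indicator A x * g x \<partial>M) = 0"
    and b: "0 < b"
  shows "AE x in M. \<exists>C. \<forall>n. bsum T g n x \<le> C + real n * b"
proof -
  interpret prob_space M by fact
  define h where "h x = g x - b" for x
  have hi: "integrable M h" unfolding h_def using g by auto
  have hm[measurable]: "\<And>n. bsum T h n \<in> borel_measurable M"
    using bsum_int[OF T hi] by auto
  define D where "D = {x\<in>space M. \<forall>m::nat. \<exists>n. real m < bsum T h n x}"
  have Dsets: "D \<in> sets M" unfolding D_def by measurable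
  have Tsp: "\<And>x. x \<in> space M \<Longrightarrow> T x \<in> space M" using measurable_space[OF T(1)] .
  have Dinv: "T -` D \<inter> space M = D"
  proof (intro set_eqI iffI)
    fix x assume "x \<in> T -` D \<inter> space M"
    then have x: "x \<in> space M" and Tx: "\<forall>m::nat. \<exists>n. real m < bsum T h n (T x)"
      unfolding D_def by auto
    have "\<exists>n. real m < bsum T h n x" for m :: nat
    proof -
      obtain n where n: "real (m + nat \<lceil>\<bar>h x\<bar>\<rceil>) < bsum T h n (T x)" using Tx by blast
      have "real m \<le> real (m + nat \<lceil>\<bar>h x\<bar>\<rceil>) - \<bar>h x\<bar>" by linarith
      then have "real m < h x + bsum T h n (T x)" using n by linarith
      then show ?thesis using bsum_Suc[of T h n x] by metis
    qed
    then show "x \<in> D" using x unfolding D_def by auto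
  next
    fix x assume "x \<in> D"
    then have x: "x \<in> space M" and Dx: "\<forall>m::nat. \<exists>n. real m < bsum T h n x"
      unfolding D_def by auto
    have "\<exists>n. real m < bsum T h n (T x)" for m :: nat
    proof -
      obtain n where n: "real (m + nat \<lceil>\<bar>h x\<bar>\<rceil>) < bsum T h n x" using Dx by blast
      have ge: "real m + \<bar>h x\<bar> \<le> real (m + nat \<lceil>\<bar>h x\<bar>\<rceil>)" by linarith
      have "n \<noteq> 0"
      proof
        assume "n = 0"
        then have "real (m + nat \<lceil>\<bar>h x\<bar>\<rceil>) < 0" using n by simp
        then show False by (simp only: of_nat_less_0_iff)
      qed
      then obtain k where k: "n = Suc k" by (cases n) auto
      have "bsum T h n x = h x + bsum T h k (T x)" using k bsum_Suc by simp
      then have "real m < bsum T h k (T x)" using n ge by linarith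
      then show ?thesis by blast
    qed
    then show "x \<in> T -` D \<inter> space M" using x Tsp unfolding D_def by auto
  qed
  define \<phi> where "\<phi> x = indicator D x * h x" for x
  have \<phi>i: "integrable M \<phi>" unfolding \<phi>_def by (rule integrable_ind_mult[OF Dsets hi])
  have "0 \<le> (\<integral>x. \<phi> x \<partial>M)"
  proof (rule maximal2[OF T \<phi>i])
    fix x assume x: "x \<in> space M" and "\<phi> x \<noteq> 0"
    then have xD: "x \<in> D" unfolding \<phi>_def by (auto simp: indicator_def split: if_splits)
    then obtain n where n: "real (0::nat) < bsum T h n x" unfolding D_def by blast
    have "bsum T \<phi> n x = bsum T h n x"
      unfolding bsum_def \<phi>_def using inv_pow_mem[OF T(1) Dinv xD] by simp
    then show "\<exists>n. 0 < bsum T \<phi> n x" using n by (intro exI[of _ n]) simp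
  qed
  also have "(\<integral>x. \<phi> x \<partial>M) = (\<integral>x. indicator D x * g x - b * indicator D x \<partial>M)"
    unfolding \<phi>_def h_def by (intro Bochner_Integration.integral_cong) (auto simp: algebra_simps)
  also have "\<dots> = (\<integral>x. indicator D x * g x \<partial>M) - (\<integral>x. b * indicator D x \<partial>M)"
    using integrable_ind_mult[OF Dsets, of "\<lambda>x. b"]
    by (intro Bochner_Integration.integral_diff integrable_ind_mult[OF Dsets g]) (simp_all add: mult.commute)
  also have "\<dots> = - b * measure M D"
    using zero[OF Dsets Dinv] Dsets by simp
  finally have "measure M D \<le> 0" using b by (simp add: mult_le_0_iff)
  then have "measure M D = 0" using measure_nonneg[of M D] by linarith
  then have "D \<in> null_sets M" using Dsets by (simp add: emeasure_eq_measure null_sets_def)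
  then have "AE x in M. x \<notin> D" by (rule AE_not_in)
  then show ?thesis
  proof (rule AE_mp[OF _ AE_I2], intro impI)
    fix x assume x: "x \<in> space M" and "x \<notin> D"
    then obtain m :: nat where m: "\<forall>n. bsum T h n x \<le> real m" unfolding D_def by (auto simp: not_less)
    show "\<exists>C. \<forall>n. bsum T g n x \<le> C + real n * b"
      using m unfolding h_def bsum_diff_const by (intro exI[of _ "real m"]) (auto simp: algebra_simps)
  qed
qed

lemma avg_small:
  fixes s C b r :: real
  assumes s: "\<bar>s\<bar> \<le> C + real n * b" and n: "real n > 2 * C / r" and r: "0 < r" and b: "b < r / 2"
    and C: "0 \<le> C" and n0: "0 < n"
  shows "\<bar>1 / real n * s\<bar> < r"
proof -
  have np: "0 < real n" using n0 by simp
  have "2 * C < real n * r" using n r by (simp add: field_simps)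
  moreover have "real n * b < real n * (r / 2)" using b np by (rule mult_strict_left_mono)
  ultimately have "C + real n * b < real n * r" by (simp add: field_simps)
  then have "\<bar>s\<bar> < real n * r" using s by linarith
  then show ?thesis using np by (simp add: abs_mult field_simps)
qed

lemma birkzero:
  fixes g :: "_ \<Rightarrow> real"
  assumes P: "prob_space M" and T: "T \<in> M \<rightarrow>\<^sub>M M" "distr M M T = M" and g: "integrable M g"
    and zero: "\<And>A. A \<in> sets M \<Longrightarrow> T -` A \<inter> space M = A \<Longrightarrow> (\<integral>x. indicator A x * g x \<partial>M) = 0"
  shows "AE x in M. (\<lambda>n. 1 / real n * bsum T g n x) \<longlonglongrightarrow> 0"
proof -
  have zero': "(\<integral>x. indicator A x * (- g x) \<partial>M) = 0"
    if "A \<in> sets M" "T -` A \<inter> space M = A" for A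
    using zero[OF that] by simp
  have neg: "bsum T (\<lambda>x. - g x) n x = - bsum T g n x" for n x
    unfolding bsum_def by (simp add: sum_negf)
  have "\<forall>k::nat. AE x in M. (\<exists>C. \<forall>n. bsum T g n x \<le> C + real n * inverse (real (Suc k)))
        \<and> (\<exists>C. \<forall>n. bsum T (\<lambda>x. - g x) n x \<le> C + real n * inverse (real (Suc k)))"
  proof
    fix k :: nat
    have b: "0 < inverse (real (Suc k))" by simp
    show "AE x in M. (\<exists>C. \<forall>n. bsum T g n x \<le> C + real n * inverse (real (Suc k)))
        \<and> (\<exists>C. \<forall>n. bsum T (\<lambda>x. - g x) n x \<le> C + real n * inverse (real (Suc k)))"
      by (rule AE_conjI[OF birk0[OF P T g zero b] birk0[OF P T integrable_minus[OF g] zero' b]])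
  qed
  then have "AE x in M. \<forall>k::nat. (\<exists>C. \<forall>n. bsum T g n x \<le> C + real n * inverse (real (Suc k)))
        \<and> (\<exists>C. \<forall>n. bsum T (\<lambda>x. - g x) n x \<le> C + real n * inverse (real (Suc k)))"
    by (simp add: AE_all_countable)
  then show ?thesis
  proof (rule AE_mp[OF _ AE_I2], intro impI)
    fix x assume H: "\<forall>k::nat. (\<exists>C. \<forall>n. bsum T g n x \<le> C + real n * inverse (real (Suc k)))
        \<and> (\<exists>C. \<forall>n. bsum T (\<lambda>x. - g x) n x \<le> C + real n * inverse (real (Suc k)))"
    show "(\<lambda>n. 1 / real n * bsum T g n x) \<longlonglongrightarrow> 0"
    proof (rule LIMSEQ_I)
      fix r :: real assume r: "0 < r"
      then have "0 < r / 2" by simp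
      then obtain m :: nat where m: "0 < m" "inverse (real m) < r / 2"
        using ex_inverse_of_nat_less by blast
      define k where "k = m - 1"
      have mk: "Suc k = m" using m unfolding k_def by simp
      obtain C1 C2 where C1: "\<forall>n. bsum T g n x \<le> C1 + real n * inverse (real (Suc k))"
        and C2: "\<forall>n. bsum T (\<lambda>x. - g x) n x \<le> C2 + real n * inverse (real (Suc k))"
        using H by blast
      define C where "C = \<bar>C1\<bar> + \<bar>C2\<bar>"
      have Cb: "\<bar>bsum T g n x\<bar> \<le> C + real n * inverse (real (Suc k))" for n
        using C1[rule_format, of n] C2[rule_format, of n] unfolding neg C_def by linarith
      define N where "N = nat \<lceil>2 * C / r\<rceil> + 1"
      show "\<exists>N. \<forall>n\<ge>N. norm (1 / real n * bsum T g n x - 0) < r"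
      proof (intro exI allI impI)
        fix n assume "N \<le> n"
        then have n: "real n > 2 * C / r" and n0: "0 < n" unfolding N_def by linarith+
        show "norm (1 / real n * bsum T g n x - 0) < r"
          using avg_small[OF Cb n r _ _ n0] m mk unfolding C_def by simp
      qed
    qed
  qed
qed

lemma birkhoff:
  fixes f :: "_ \<Rightarrow> real"
  assumes P: "prob_space M" and T: "T \<in> M \<rightarrow>\<^sub>M M" "distr M M T = M" and f: "integrable M f"
  shows "AE x in M. (\<lambda>n. 1 / real n * bsum T f n x) \<longlonglongrightarrow> real_cond_exp M (invariant_sigma M T) f x"
proof -
  define I where "I = invariant_sigma M T"
  have sub: "subalgebra M I" unfolding subalgebra_def I_def using inv_sets[OF T(1)] by auto
  have sfs: "sigma_finite_subalgebra M I"
    apply (rule finite_measure_subalgebra_is_sigma_finite)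
    unfolding finite_measure_subalgebra_def finite_measure_subalgebra_axioms_def
    using sub P prob_space_def by blast
  define h where "h = real_cond_exp M I f"
  have hI: "h \<in> borel_measurable I" unfolding h_def
    by (rule borel_measurable_cond_exp)
  have hint: "integrable M h" unfolding h_def
    by (rule sigma_finite_subalgebra.real_cond_exp_int(1)[OF sfs f])
  have hT: "\<And>x i. x \<in> space M \<Longrightarrow> h ((T^^i) x) = h x"
    using inv_meas_invariant_pow[OF T(1)] hI unfolding I_def by blast
  define g where "g x = f x - h x" for x
  have gi: "integrable M g" unfolding g_def using f hint by auto
  have zero: "(\<integral>x. indicator A x * g x \<partial>M) = 0"
    if A: "A \<in> sets M" "T -` A \<inter> space M = A" for A
  proof -
    have AI: "A \<in> sets I" unfolding I_def using inv_sets[OF T(1)] A by simp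
    have "(\<integral>x. indicator A x * g x \<partial>M) = (\<integral>x. indicator A x * f x \<partial>M) - (\<integral>x. indicator A x * h x \<partial>M)"
      unfolding g_def using integrable_ind_mult[OF A(1) f] integrable_ind_mult[OF A(1) hint]
      by (simp add: right_diff_distrib)
    also have "\<dots> = 0"
      using sigma_finite_subalgebra.real_cond_exp_intA[OF sfs f AI]
      unfolding set_lebesgue_integral_def h_def by simp
    finally show ?thesis .
  qed
  have "AE x in M. (\<lambda>n. 1 / real n * bsum T g n x) \<longlonglongrightarrow> 0"
    by (rule birkzero[OF P T gi zero])
  then show ?thesis
  proof (rule AE_mp[OF _ AE_I2], intro impI)
    fix x assume x: "x \<in> space M" and L: "(\<lambda>n. 1 / real n * bsum T g n x) \<longlonglongrightarrow> 0"
    have eq: "1 / real n * bsum T f n x = 1 / real n * bsum T g n x + h x" if "0 < n" for n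
    proof -
      have "bsum T f n x = bsum T g n x + real n * h x"
        unfolding bsum_def g_def using hT[OF x] by (simp add: sum_subtractf)
      then show ?thesis using that by (simp add: field_simps)
    qed
    have "(\<lambda>n. 1 / real n * bsum T g n x + h x) \<longlonglongrightarrow> 0 + h x"
      by (intro tendsto_add L tendsto_const)
    then have "(\<lambda>n. 1 / real n * bsum T g n x + h x) \<longlonglongrightarrow> h x" by simp
    moreover have "eventually (\<lambda>n. 1 / real n * bsum T g n x + h x = 1 / real n * bsum T f n x) sequentially"
      using eventually_gt_at_top[of "0::nat"] by (rule eventually_mono) (metis eq)
    ultimately show "(\<lambda>n. 1 / real n * bsum T f n x) \<longlonglongrightarrow> real_cond_exp M (invariant_sigma M T) f x"
      unfolding h_def I_def by (rule Lim_transform_eventually)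
  qed
qed

lemma unif_cauchy:
  fixes a :: "nat \<Rightarrow> 'm::metric_space \<Rightarrow> real"
  assumes cpt: "compact (UNIV :: 'm set)"
    and dense: "\<And>U. open U \<Longrightarrow> U \<noteq> {} \<Longrightarrow> \<exists>t\<in>U. convergent (\<lambda>n. a n t)"
    and equi: "\<And>t \<epsilon>. \<epsilon> > 0 \<Longrightarrow> \<exists>\<delta>>0. \<forall>s. dist s t < \<delta> \<longrightarrow> (\<forall>n\<ge>1. \<bar>a n s - a n t\<bar> < \<epsilon>)"
    and eps: "\<epsilon> > 0"
  shows "\<exists>N. \<forall>m\<ge>N. \<forall>n\<ge>N. \<forall>s. \<bar>a m s - a n s\<bar> < \<epsilon>"
proof -
  define e where "e = \<epsilon> / 5"
  have e: "e > 0" using eps unfolding e_def by simp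
  have ex: "\<forall>t. \<exists>\<delta>>0. \<forall>s. dist s t < \<delta> \<longrightarrow> (\<forall>n\<ge>1. \<bar>a n s - a n t\<bar> < e)"
    using equi[OF e] by blast
  obtain \<delta> where \<delta>0: "\<forall>t. \<delta> t > 0 \<and> (\<forall>s. dist s t < \<delta> t \<longrightarrow> (\<forall>n\<ge>1. \<bar>a n s - a n t\<bar> < e))"
    using choice[OF ex] by blast
  then have \<delta>: "\<And>t. \<delta> t > 0"
    and \<delta>': "\<And>t s n. dist s t < \<delta> t \<Longrightarrow> n \<ge> 1 \<Longrightarrow> \<bar>a n s - a n t\<bar> < e"
    by blast+
  have cov: "UNIV \<subseteq> (\<Union>t\<in>UNIV. ball t (\<delta> t))" using \<delta> by auto
  obtain Fs where Fs: "finite Fs" "UNIV \<subseteq> (\<Union>t\<in>Fs. ball t (\<delta> t))"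
  proof (rule compactE_image[OF cpt _ cov])
    fix C' assume "C' \<subseteq> UNIV" "finite C'" "UNIV \<subseteq> (\<Union>t\<in>C'. ball t (\<delta> t))"
    then show thesis using that by blast
  qed simp
  have ex2: "\<forall>c. \<exists>p. p \<in> ball c (\<delta> c) \<and> convergent (\<lambda>n. a n p)"
  proof
    fix c
    have "ball c (\<delta> c) \<noteq> {}" using \<delta>[of c] by (simp add: ball_eq_empty not_le)
    then have "\<exists>p\<in>ball c (\<delta> c). convergent (\<lambda>n. a n p)" by (rule dense[OF open_ball])
    then show "\<exists>p. p \<in> ball c (\<delta> c) \<and> convergent (\<lambda>n. a n p)" unfolding Bex_def .
  qed
  obtain p where p0: "\<forall>c. p c \<in> ball c (\<delta> c) \<and> convergent (\<lambda>n. a n (p c))"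
    using choice[OF ex2] by blast
  then have p: "\<And>c. p c \<in> ball c (\<delta> c)" "\<And>c. convergent (\<lambda>n. a n (p c))" by blast+
  have "\<forall>c. \<exists>N. \<forall>m\<ge>N. \<forall>n\<ge>N. dist (a m (p c)) (a n (p c)) < e"
  proof
    fix c
    have "Cauchy (\<lambda>n. a n (p c))" using p(2)[of c] by (simp add: Cauchy_convergent_iff)
    then show "\<exists>N. \<forall>m\<ge>N. \<forall>n\<ge>N. dist (a m (p c)) (a n (p c)) < e"
      using e by (rule metric_CauchyD)
  qed
  then obtain Nc where Nc0: "\<forall>c. \<forall>m\<ge>Nc c. \<forall>n\<ge>Nc c. dist (a m (p c)) (a n (p c)) < e"
    using choice[of "\<lambda>c N. \<forall>m\<ge>N. \<forall>n\<ge>N. dist (a m (p c)) (a n (p c)) < e"] by blast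
  have Nc: "\<And>c m n. m \<ge> Nc c \<Longrightarrow> n \<ge> Nc c \<Longrightarrow> \<bar>a m (p c) - a n (p c)\<bar> < e"
    using Nc0 unfolding dist_real_def by blast
  define N where "N = Max (insert 1 (Nc ` Fs))"
  have N1: "1 \<le> N" and NF: "\<And>c. c \<in> Fs \<Longrightarrow> Nc c \<le> N"
    unfolding N_def using Fs(1) by auto
  show ?thesis
  proof (intro exI allI impI)
    fix m n s assume m: "N \<le> m" and n: "N \<le> n"
    obtain c where c: "c \<in> Fs" "s \<in> ball c (\<delta> c)" using Fs(2) by blast
    have d1: "dist s c < \<delta> c" using c(2) by (simp add: dist_commute)
    have d2: "dist (p c) c < \<delta> c" using p(1)[of c] by (simp add: dist_commute)
    have m1: "m \<ge> 1" and n1: "n \<ge> 1" using m n N1 by auto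
    have "\<bar>a m s - a m c\<bar> < e" "\<bar>a n s - a n c\<bar> < e" using \<delta>'[OF d1] m1 n1 by auto
    moreover have "\<bar>a m (p c) - a m c\<bar> < e" "\<bar>a n (p c) - a n c\<bar> < e" using \<delta>'[OF d2] m1 n1 by auto
    moreover have "\<bar>a m (p c) - a n (p c)\<bar> < e" using Nc NF[OF c(1)] m n by auto
    ultimately show "\<bar>a m s - a n s\<bar> < \<epsilon>" unfolding e_def abs_less_iff by linarith
  qed
qed

lemma unif_conv:
  fixes a :: "nat \<Rightarrow> 'm::metric_space \<Rightarrow> real"
  assumes cpt: "compact (UNIV :: 'm set)"
    and dense: "\<And>U. open U \<Longrightarrow> U \<noteq> {} \<Longrightarrow> \<exists>t\<in>U. convergent (\<lambda>n. a n t)"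
    and equi: "\<And>t \<epsilon>. \<epsilon> > 0 \<Longrightarrow> \<exists>\<delta>>0. \<forall>s. dist s t < \<delta> \<longrightarrow> (\<forall>n\<ge>1. \<bar>a n s - a n t\<bar> < \<epsilon>)"
  shows "\<And>t. convergent (\<lambda>n. a n t)"
    and "(\<lambda>n. SUP t. ereal \<bar>a n t - lim (\<lambda>n. a n t)\<bar>) \<longlonglongrightarrow> 0"
proof -
  have UC: "\<exists>N. \<forall>m\<ge>N. \<forall>n\<ge>N. \<forall>s. \<bar>a m s - a n s\<bar> < \<epsilon>" if "0 < \<epsilon>" for \<epsilon>
    apply (rule unif_cauchy[OF cpt])
      apply (rule dense, assumption+)
     apply (rule equi, assumption)
    apply (rule that)
    done
  show conv: "convergent (\<lambda>n. a n t)" for t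
  proof -
    have "Cauchy (\<lambda>n. a n t)"
    proof (rule metric_CauchyI)
      fix \<epsilon> :: real assume "0 < \<epsilon>"
      then obtain N where "\<forall>m\<ge>N. \<forall>n\<ge>N. \<forall>s. \<bar>a m s - a n s\<bar> < \<epsilon>" using UC by blast
      then show "\<exists>M. \<forall>m\<ge>M. \<forall>n\<ge>M. dist (a m t) (a n t) < \<epsilon>" by (auto simp: dist_real_def)
    qed
    then show ?thesis by (simp add: Cauchy_convergent_iff)
  qed
  have lim: "(\<lambda>n. a n t) \<longlonglongrightarrow> lim (\<lambda>n. a n t)" for t
    using conv[of t] by (simp add: convergent_LIMSEQ_iff)
  have bound: "\<exists>N. \<forall>n\<ge>N. \<forall>t. \<bar>a n t - lim (\<lambda>n. a n t)\<bar> \<le> \<epsilon>" if eps: "\<epsilon> > 0" for \<epsilon>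
  proof -
    obtain N where N: "\<forall>m\<ge>N. \<forall>n\<ge>N. \<forall>s. \<bar>a m s - a n s\<bar> < \<epsilon>" using UC[OF eps] by blast
    show ?thesis
    proof (intro exI allI impI)
      fix n t assume n: "N \<le> n"
      have "(\<lambda>m. \<bar>a n t - a m t\<bar>) \<longlonglongrightarrow> \<bar>a n t - lim (\<lambda>n. a n t)\<bar>"
        by (intro tendsto_intros lim)
      moreover have "eventually (\<lambda>m. \<bar>a n t - a m t\<bar> \<le> \<epsilon>) sequentially"
        unfolding eventually_sequentially
      proof (intro exI allI impI)
        fix m assume "N \<le> m"
        then show "\<bar>a n t - a m t\<bar> \<le> \<epsilon>" using N n by (meson less_imp_le)
      qed
      ultimately show "\<bar>a n t - lim (\<lambda>n. a n t)\<bar> \<le> \<epsilon>"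
        by (rule tendsto_upperbound) simp
    qed
  qed
  show "(\<lambda>n. SUP t. ereal \<bar>a n t - lim (\<lambda>n. a n t)\<bar>) \<longlonglongrightarrow> 0"
  proof (rule order_tendstoI)
    fix y :: ereal assume "y < 0"
    have "y < (SUP t. ereal \<bar>a n t - lim (\<lambda>n. a n t)\<bar>)" for n
    proof -
      have "y < ereal \<bar>a n undefined - lim (\<lambda>n. a n undefined)\<bar>" using \<open>y < 0\<close>
        by (meson abs_ge_zero ereal_less_eq(5) order_less_le_trans)
      also have "\<dots> \<le> (SUP t. ereal \<bar>a n t - lim (\<lambda>n. a n t)\<bar>)" by (rule SUP_upper) simp
      finally show ?thesis .
    qed
    then show "eventually (\<lambda>n. y < (SUP t. ereal \<bar>a n t - lim (\<lambda>n. a n t)\<bar>)) sequentially" by simp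
  next
    fix y :: ereal assume "0 < y"
    then obtain z where z: "0 < ereal z" "ereal z < y" using ereal_dense2 by blast
    then have "0 < z / 2" by simp
    then obtain N where N: "\<forall>n\<ge>N. \<forall>t. \<bar>a n t - lim (\<lambda>n. a n t)\<bar> \<le> z / 2" using bound by blast
    show "eventually (\<lambda>n. (SUP t. ereal \<bar>a n t - lim (\<lambda>n. a n t)\<bar>) < y) sequentially"
      unfolding eventually_sequentially
    proof (intro exI allI impI)
      fix n assume "N \<le> n"
      then have "(SUP t. ereal \<bar>a n t - lim (\<lambda>n. a n t)\<bar>) \<le> ereal (z / 2)"
        using N by (intro SUP_least) auto
      also have "\<dots> < ereal z" using z by simp
      finally show "(SUP t. ereal \<bar>a n t - lim (\<lambda>n. a n t)\<bar>) < y" using z by simp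
    qed
  qed
qed

lemma avg_shift:
  fixes s s' :: "nat \<Rightarrow> real"
  assumes rec: "\<And>n. s (Suc n) = v + s' n"
  shows "(\<lambda>n. 1 / real n * s' n) \<longlonglongrightarrow> L \<longleftrightarrow> (\<lambda>n. 1 / real n * s n) \<longlonglongrightarrow> L"
proof
  assume c: "(\<lambda>n. 1 / real n * s' n) \<longlonglongrightarrow> L"
  have eq: "v / real (Suc n) + (real n / real (Suc n)) * (1 / real n * s' n) = 1 / real (Suc n) * s (Suc n)"
    if "0 < n" for n
  proof -
    have "(real n / real (Suc n)) * (1 / real n * s' n) = s' n / real (Suc n)"
      using that by (simp add: divide_simps del: of_nat_Suc)
    then show ?thesis by (simp add: rec add_divide_distrib del: of_nat_Suc)
  qed
  have v0: "(\<lambda>n. v / real (Suc n)) \<longlonglongrightarrow> 0" using LIMSEQ_Suc[OF lim_const_over_n[of v]] .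
  have "(\<lambda>n. v / real (Suc n) + (real n / real (Suc n)) * (1 / real n * s' n)) \<longlonglongrightarrow> 0 + 1 * L"
    by (intro tendsto_add tendsto_mult c LIMSEQ_n_over_Suc_n v0)
  then have "(\<lambda>n. v / real (Suc n) + (real n / real (Suc n)) * (1 / real n * s' n)) \<longlonglongrightarrow> L" by simp
  moreover have "eventually (\<lambda>n. v / real (Suc n) + (real n / real (Suc n)) * (1 / real n * s' n) = 1 / real (Suc n) * s (Suc n)) sequentially"
    using eventually_gt_at_top[of "0::nat"] by (rule eventually_mono) (rule eq)
  ultimately have "(\<lambda>n. 1 / real (Suc n) * s (Suc n)) \<longlonglongrightarrow> L" by (rule Lim_transform_eventually)
  then show "(\<lambda>n. 1 / real n * s n) \<longlonglongrightarrow> L" by (rule LIMSEQ_imp_Suc)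
next
  assume a: "(\<lambda>n. 1 / real n * s n) \<longlonglongrightarrow> L"
  then have a': "(\<lambda>n. 1 / real (Suc n) * s (Suc n)) \<longlonglongrightarrow> L" by (rule LIMSEQ_Suc)
  have "(\<lambda>n. (real (Suc n) / real n) * (1 / real (Suc n) * s (Suc n)) - v / real n) \<longlonglongrightarrow> 1 * L - 0"
    by (intro tendsto_diff tendsto_mult a' LIMSEQ_Suc_n_over_n lim_const_over_n)
  moreover have "eventually (\<lambda>n. (real (Suc n) / real n) * (1 / real (Suc n) * s (Suc n)) - v / real n
      = 1 / real n * s' n) sequentially"
    using eventually_gt_at_top[of "0::nat"]
    by (rule eventually_mono) (simp add: rec field_simps del: of_nat_Suc)
  ultimately show "(\<lambda>n. 1 / real n * s' n) \<longlonglongrightarrow> L" by (simp add: Lim_transform_eventually)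
qed

lemma avg_shift_Cauchy:
  fixes s s' :: "nat \<Rightarrow> real"
  assumes rec: "\<And>n. s (Suc n) = v + s' n"
  shows "Cauchy (\<lambda>n. 1 / real n * s' n) \<longleftrightarrow> Cauchy (\<lambda>n. 1 / real n * s n)"
    and "lim (\<lambda>n. 1 / real n * s' n) = lim (\<lambda>n. 1 / real n * s n)"
proof -
  show "Cauchy (\<lambda>n. 1 / real n * s' n) \<longleftrightarrow> Cauchy (\<lambda>n. 1 / real n * s n)"
    unfolding Cauchy_convergent_iff convergent_def using avg_shift[where s=s and s'=s' and v=v, OF rec] by blast
  show "lim (\<lambda>n. 1 / real n * s' n) = lim (\<lambda>n. 1 / real n * s n)"
    unfolding lim_def using avg_shift[where s=s and s'=s' and v=v, OF rec] by simp
qed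

lemma dense_AE:
  fixes \<mu> :: "'m::topological_space measure"
  assumes mu_sets: "sets \<mu> = sets borel"
    and mu_supp: "\<And>U. open U \<Longrightarrow> U \<noteq> {} \<Longrightarrow> emeasure \<mu> U > 0"
    and ae: "AE t in \<mu>. Q t" and U: "open U" "U \<noteq> {}"
  shows "\<exists>t\<in>U. Q t"
proof (rule ccontr)
  assume "\<not> (\<exists>t\<in>U. Q t)"
  obtain N where N: "N \<in> null_sets \<mu>" "{t\<in>space \<mu>. \<not> Q t} \<subseteq> N" using ae unfolding eventually_ae_filter by blast
  have sp: "space \<mu> = UNIV" using sets_eq_imp_space_eq[OF mu_sets] by simp
  have "U \<subseteq> N" using N(2) \<open>\<not> (\<exists>t\<in>U. Q t)\<close> sp by auto
  moreover have "U \<in> sets \<mu>" using U(1) mu_sets by simp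
  ultimately have "emeasure \<mu> U \<le> emeasure \<mu> N" using N(1) by (intro emeasure_mono) auto
  then have "emeasure \<mu> U = 0" using N(1) by (metis antisym zero_le null_setsD1)
  then show False using mu_supp[OF U] by simp
qed

locale Ctx =
  fixes P :: "'a measure"
    and K :: "(int ^ 'd) set"
    and \<theta> :: "int ^ 'd \<Rightarrow> 'a \<Rightarrow> 'a"
    and \<mu> :: "'m :: {metric_space, second_countable_topology} measure"
    and \<tau> :: "'m \<Rightarrow> 'm"
    and \<kappa> :: "'m \<Rightarrow> int ^ 'd"
    and F :: "'m \<times> 'a \<Rightarrow> real"
  assumes P: "prob_space P"
    and K: "K = orthant \<or> K = UNIV"
    and theta_mp: "\<And>k. k \<in> K \<Longrightarrow> measure_preserving_map P (\<theta> k)"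
    and theta_0: "\<theta> 0 = id"
    and theta_comp: "\<And>k l. k \<in> K \<Longrightarrow> l \<in> K \<Longrightarrow> \<theta> k \<circ> \<theta> l = \<theta> (k + l)"
    and M_compact: "compact (UNIV :: 'm set)"
    and mu_sets: "sets \<mu> = sets borel"
    and mu_prob: "prob_space \<mu>"
    and tau_cont: "continuous_on UNIV \<tau>"
    and tau_inv: "measure_preserving_map \<mu> \<tau>"
    and mu_supp: "\<And>U. open U \<Longrightarrow> U \<noteq> {} \<Longrightarrow> emeasure \<mu> U > 0"
    and kappa_meas: "\<kappa> \<in> borel \<rightarrow>\<^sub>M count_space UNIV"
    and kappa_K: "\<And>t. \<kappa> t \<in> K"
    and F_meas: "F \<in> borel_measurable (\<mu> \<Otimes>\<^sub>M P)"
    and F_int: "integrable (\<mu> \<Otimes>\<^sub>M P) F"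
begin

definition S where "S = (\<lambda>(t, \<omega>). (\<tau> t, \<theta> (\<kappa> t) \<omega>))"
abbreviation Pm where "Pm \<equiv> \<mu> \<Otimes>\<^sub>M P"

lemma zero_K: "0 \<in> K" using K unfolding orthant_def by auto

lemma add_K: "a \<in> K \<Longrightarrow> b \<in> K \<Longrightarrow> a + b \<in> K"
  using K unfolding orthant_def by auto

lemma ks_Suc: "kappa_sum \<kappa> \<tau> (Suc i) t = kappa_sum \<kappa> \<tau> i t + \<kappa> ((\<tau>^^i) t)"
  unfolding kappa_sum_def by simp

lemma ks_K: "kappa_sum \<kappa> \<tau> i t \<in> K"
proof (induction i)
  case 0 then show ?case using zero_K by (simp add: kappa_sum_def)
next
  case (Suc i) then show ?case using add_K kappa_K by (simp add: ks_Suc)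
qed

lemma S_pow: "(S^^i) (t, \<omega>) = ((\<tau>^^i) t, \<theta> (kappa_sum \<kappa> \<tau> i t) \<omega>)"
proof (induction i)
  case 0 then show ?case using theta_0 by (simp add: kappa_sum_def)
next
  case (Suc i)
  have "(S^^Suc i) (t, \<omega>) = S ((\<tau>^^i) t, \<theta> (kappa_sum \<kappa> \<tau> i t) \<omega>)" using Suc by simp
  also have "\<dots> = ((\<tau>^^Suc i) t, \<theta> (\<kappa> ((\<tau>^^i) t)) (\<theta> (kappa_sum \<kappa> \<tau> i t) \<omega>))"
    unfolding S_def by simp
  also have "\<theta> (\<kappa> ((\<tau>^^i) t)) (\<theta> (kappa_sum \<kappa> \<tau> i t) \<omega>) = \<theta> (\<kappa> ((\<tau>^^i) t) + kappa_sum \<kappa> \<tau> i t) \<omega>"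
    using theta_comp[OF kappa_K ks_K] by (metis comp_apply)
  also have "\<kappa> ((\<tau>^^i) t) + kappa_sum \<kappa> \<tau> i t = kappa_sum \<kappa> \<tau> (Suc i) t"
    by (simp add: ks_Suc add.commute)
  finally show ?case .
qed

lemma erg_eq: "erg_avg F \<tau> \<theta> \<kappa> n t \<omega> = 1 / real n * bsum S F n (t, \<omega>)"
  unfolding erg_avg_def bsum_def S_pow by simp

lemma sp_mu: "space \<mu> = UNIV"
  using sets_eq_imp_space_eq[OF mu_sets] by simp

lemma tau_m: "\<tau> \<in> \<mu> \<rightarrow>\<^sub>M \<mu>"
  using borel_measurable_continuous_onI[OF tau_cont] measurable_cong_sets[OF mu_sets mu_sets] by simp

lemma kappa_m: "\<kappa> \<in> \<mu> \<rightarrow>\<^sub>M count_space K"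
proof -
  have e: "\<mu> \<rightarrow>\<^sub>M (count_space UNIV :: (int^'d) measure) = borel \<rightarrow>\<^sub>M count_space UNIV"
    by (rule measurable_cong_sets[OF mu_sets refl])
  have k: "\<kappa> \<in> \<mu> \<rightarrow>\<^sub>M count_space UNIV"
    unfolding e by (rule kappa_meas)
  show ?thesis
    unfolding measurable_count_space_eq2_countable
  proof (intro conjI ballI)
    show "\<kappa> \<in> space \<mu> \<rightarrow> K" using kappa_K by auto
    fix a assume "a \<in> K"
    show "\<kappa> -` {a} \<inter> space \<mu> \<in> sets \<mu>" using measurable_sets[OF k, of "{a}"] by simp
  qed
qed

lemma theta_m: "k \<in> K \<Longrightarrow> \<theta> k \<in> P \<rightarrow>\<^sub>M P"
  using theta_mp unfolding measure_preserving_map_def by blast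

lemma theta_d: "k \<in> K \<Longrightarrow> distr P P (\<theta> k) = P"
  using theta_mp unfolding measure_preserving_map_def by blast

lemma S_alt: "S = (\<lambda>x. (\<tau> (fst x), \<theta> (\<kappa> (fst x)) (snd x)))"
  unfolding S_def by (simp add: split_beta')

lemma S_m: "S \<in> Pm \<rightarrow>\<^sub>M Pm"
  unfolding S_alt
proof (rule measurable_Pair)
  show "(\<lambda>x. \<tau> (fst x)) \<in> Pm \<rightarrow>\<^sub>M \<mu>" by (rule measurable_compose[OF measurable_fst tau_m])
  show "(\<lambda>x. \<theta> (\<kappa> (fst x)) (snd x)) \<in> Pm \<rightarrow>\<^sub>M P"
  proof (rule measurable_compose_countable'[where I=K and f="\<lambda>k x. \<theta> k (snd x)"])
    show "\<And>i. i \<in> K \<Longrightarrow> (\<lambda>x. \<theta> i (snd x)) \<in> Pm \<rightarrow>\<^sub>M P"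
      by (rule measurable_compose[OF measurable_snd theta_m])
    show "(\<lambda>x. \<kappa> (fst x)) \<in> Pm \<rightarrow>\<^sub>M count_space K"
      by (rule measurable_compose[OF measurable_fst kappa_m])
    show "countable K" by (rule countable_subset[OF subset_UNIV countableI_type])
  qed
qed

end

context Ctx begin

lemma S_d: "distr Pm Pm S = Pm"
proof -
  interpret PP: prob_space P by (rule P)
  interpret MM: prob_space \<mu> by (rule mu_prob)
  have sfP: "sigma_finite_measure P" by (rule prob_space_imp_sigma_finite[OF P])
  have sfM: "sigma_finite_measure \<mu>" by (rule prob_space_imp_sigma_finite[OF mu_prob])
  have "Pm = distr Pm Pm S"
  proof (rule pair_measure_eqI[OF sfM sfP])
    show "sets Pm = sets (distr Pm Pm S)" by simp
    fix A B assume A: "A \<in> sets \<mu>" and B: "B \<in> sets P"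
    have AB: "A \<times> B \<in> sets Pm" using A B by (rule pair_measureI)
    define X where "X = S -` (A \<times> B) \<inter> space Pm"
    have X: "X \<in> sets Pm" unfolding X_def by (rule measurable_sets[OF S_m AB])
    have slice: "Pair t -` X = (if \<tau> t \<in> A then \<theta> (\<kappa> t) -` B \<inter> space P else {})" for t
      unfolding X_def S_def by (auto simp: space_pair_measure sp_mu)
    have th: "emeasure P (\<theta> k -` B \<inter> space P) = emeasure P B" if "k \<in> K" for k
      using emeasure_distr[OF theta_m[OF that] B] theta_d[OF that] by simp
    have "emeasure (distr Pm Pm S) (A \<times> B) = emeasure Pm X"
      unfolding X_def by (rule emeasure_distr[OF S_m AB])
    also have "\<dots> = (\<integral>\<^sup>+t. emeasure P (Pair t -` X) \<partial>\<mu>)"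
      by (rule sigma_finite_measure.emeasure_pair_measure_alt[OF sfP X])
    also have "\<dots> = (\<integral>\<^sup>+t. emeasure P B * indicator (\<tau> -` A \<inter> space \<mu>) t \<partial>\<mu>)"
      by (intro nn_integral_cong) (simp add: slice th kappa_K indicator_def)
    also have "\<dots> = emeasure P B * emeasure \<mu> (\<tau> -` A \<inter> space \<mu>)"
      using measurable_sets[OF tau_m A] by (simp add: nn_integral_cmult)
    also have "emeasure \<mu> (\<tau> -` A \<inter> space \<mu>) = emeasure (distr \<mu> \<mu> \<tau>) A"
      by (rule emeasure_distr[OF tau_m A, symmetric])
    also have "distr \<mu> \<mu> \<tau> = \<mu>" using tau_inv unfolding measure_preserving_map_def by blast
    finally show "emeasure \<mu> A * emeasure P B = emeasure (distr Pm Pm S) (A \<times> B)"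
      by (simp add: mult.commute)
  qed
  then show ?thesis by simp
qed

lemma main:
  assumes equicont: "\<And>\<omega> t \<epsilon>. \<omega> \<in> space P \<Longrightarrow> \<epsilon> > 0 \<Longrightarrow>
        \<exists>\<delta>>0. \<forall>s. dist s t < \<delta> \<longrightarrow>
          (\<forall>n\<ge>1. \<bar>erg_avg F \<tau> \<theta> \<kappa> n s \<omega> - erg_avg F \<tau> \<theta> \<kappa> n t \<omega>\<bar> < \<epsilon>)"
  shows "\<exists>G. G \<in> borel_measurable (invariant_sigma Pm S)
          \<and> (AE x in Pm. G x = real_cond_exp Pm (invariant_sigma Pm S) F x)
          \<and> (AE \<omega> in P. (\<lambda>n. SUP t. ereal \<bar>erg_avg F \<tau> \<theta> \<kappa> n t \<omega> - G (t, \<omega>)\<bar>)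
                \<longlonglongrightarrow> 0)"
proof -
  have PmP: "prob_space Pm" by (rule prob_space_pair[OF mu_prob P])
  define A where "A n x = 1 / real n * bsum S F n x" for n x
  define ce where "ce = real_cond_exp Pm (invariant_sigma Pm S) F"
  have B: "AE x in Pm. (\<lambda>n. A n x) \<longlonglongrightarrow> ce x"
    unfolding A_def ce_def by (rule birkhoff[OF PmP S_m S_d F_int])
  define G where "G x = (if Cauchy (\<lambda>n. A n x) then lim (\<lambda>n. A n x) else 0)" for x
  have bm[measurable]: "\<And>n. bsum S F n \<in> borel_measurable Pm" by (rule bsum_meas[OF S_m F_meas])
  have Am[measurable]: "\<And>n. A n \<in> borel_measurable Pm" unfolding A_def[abs_def] by measurable
  have Gm: "G \<in> borel_measurable Pm" unfolding G_def[abs_def] by measurable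
  have Ginv: "G (S x) = G x" if "x \<in> space Pm" for x
  proof -
    have rec: "\<And>n. bsum S F (Suc n) x = F x + bsum S F n (S x)" by (rule bsum_Suc)
    show ?thesis unfolding G_def A_def
      using avg_shift_Cauchy[where s="\<lambda>n. bsum S F n x" and s'="\<lambda>n. bsum S F n (S x)" and v="F x", OF rec]
      by simp
  qed
  have GI: "G \<in> borel_measurable (invariant_sigma Pm S)" by (rule inv_measI[OF S_m Gm]) (rule Ginv)
  have GAE: "AE x in Pm. G x = ce x"
    using B by (rule AE_mp[OF _ AE_I2]) (auto simp: G_def intro: LIMSEQ_imp_Cauchy limI)
  have BC: "AE x in Pm. Cauchy (\<lambda>n. A n x)"
    using B by (rule AE_mp[OF _ AE_I2]) (auto intro: LIMSEQ_imp_Cauchy)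
  interpret PS: pair_sigma_finite \<mu> P
    by (intro pair_sigma_finite.intro prob_space_imp_sigma_finite mu_prob P)
  have ms: "{x\<in>space Pm. Cauchy (\<lambda>n. A n (fst x, snd x))} \<in> sets Pm" by simp
  have "AE t in \<mu>. AE \<omega> in P. Cauchy (\<lambda>n. A n (t, \<omega>))" using PS.AE_pair[OF BC] by simp
  then have AEw: "AE \<omega> in P. AE t in \<mu>. Cauchy (\<lambda>n. A n (t, \<omega>))"
    using PS.AE_commute[where P="\<lambda>t \<omega>. Cauchy (\<lambda>n. A n (t, \<omega>))", OF ms] by simp
  have unif: "(\<lambda>n. SUP t. ereal \<bar>erg_avg F \<tau> \<theta> \<kappa> n t \<omega> - G (t, \<omega>)\<bar>) \<longlonglongrightarrow> 0"
    if \<omega>: "\<omega> \<in> space P" and H: "AE t in \<mu>. Cauchy (\<lambda>n. A n (t, \<omega>))" for \<omega>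
  proof -
    define a where "a n t = erg_avg F \<tau> \<theta> \<kappa> n t \<omega>" for n t
    have aA: "a n t = A n (t, \<omega>)" for n t unfolding a_def A_def erg_eq ..
    have dense: "\<exists>t\<in>U. convergent (\<lambda>n. a n t)" if "open U" "U \<noteq> {}" for U
      using dense_AE[OF mu_sets mu_supp H that] unfolding aA Cauchy_convergent_iff .
    have equi: "\<exists>\<delta>>0. \<forall>s. dist s t < \<delta> \<longrightarrow> (\<forall>n\<ge>1. \<bar>a n s - a n t\<bar> < \<epsilon>)" if "\<epsilon> > 0" for t \<epsilon>
      unfolding a_def by (rule equicont[OF \<omega> that])
    have conv: "\<And>t. convergent (\<lambda>n. a n t)"
      and lim: "(\<lambda>n. SUP t. ereal \<bar>a n t - lim (\<lambda>n. a n t)\<bar>) \<longlonglongrightarrow> 0"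
      using unif_conv[OF M_compact dense equi] by blast+
    have "G (t, \<omega>) = lim (\<lambda>n. a n t)" for t
      using conv[of t] unfolding G_def aA Cauchy_convergent_iff[symmetric] by simp
    then show ?thesis using lim unfolding a_def by simp
  qed
  have "AE \<omega> in P. (\<lambda>n. SUP t. ereal \<bar>erg_avg F \<tau> \<theta> \<kappa> n t \<omega> - G (t, \<omega>)\<bar>) \<longlonglongrightarrow> 0"
    using AEw by (rule AE_mp[OF _ AE_I2]) (auto intro: unif)
  then show ?thesis using GI GAE unfolding ce_def by blast
qed

end

theorem theorem4p11:
  fixes P :: "'a measure"
    and K :: "(int ^ 'd) set"
    and \<theta> :: "int ^ 'd \<Rightarrow> 'a \<Rightarrow> 'a"
    and \<mu> :: "'m :: {metric_space, second_countable_topology} measure"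
    and \<tau> :: "'m \<Rightarrow> 'm"
    and \<kappa> :: "'m \<Rightarrow> int ^ 'd"
    and F :: "'m \<times> 'a \<Rightarrow> real"
  assumes P: "prob_space P"
    and K: "K = orthant \<or> K = UNIV"
    and theta_mp: "\<And>k. k \<in> K \<Longrightarrow> measure_preserving_map P (\<theta> k)"
    and theta_0: "\<theta> 0 = id"
    and theta_comp: "\<And>k l. k \<in> K \<Longrightarrow> l \<in> K \<Longrightarrow> \<theta> k \<circ> \<theta> l = \<theta> (k + l)"
    and M_compact: "compact (UNIV :: 'm set)"
    and mu_sets: "sets \<mu> = sets borel"
    and mu_prob: "prob_space \<mu>"
    and tau_cont: "continuous_on UNIV \<tau>"
    and tau_inv: "measure_preserving_map \<mu> \<tau>"
    and mu_supp: "\<And>U. open U \<Longrightarrow> U \<noteq> {} \<Longrightarrow> emeasure \<mu> U > 0"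
    and kappa_meas: "\<kappa> \<in> borel \<rightarrow>\<^sub>M count_space UNIV"
    and kappa_K: "\<And>t. \<kappa> t \<in> K"
    and F_meas: "F \<in> borel_measurable (\<mu> \<Otimes>\<^sub>M P)"
    and F_int: "integrable (\<mu> \<Otimes>\<^sub>M P) F"
    and F_sec: "\<And>t. integrable P (\<lambda>\<omega>. F (t, \<omega>))"
    and equicont: "\<And>\<omega> t \<epsilon>. \<omega> \<in> space P \<Longrightarrow> \<epsilon> > 0 \<Longrightarrow>
        \<exists>\<delta>>0. \<forall>s. dist s t < \<delta> \<longrightarrow>
          (\<forall>n\<ge>1. \<bar>erg_avg F \<tau> \<theta> \<kappa> n s \<omega> - erg_avg F \<tau> \<theta> \<kappa> n t \<omega>\<bar> < \<epsilon>)"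
  shows "\<exists>G. G \<in> borel_measurable (invariant_sigma (\<mu> \<Otimes>\<^sub>M P) (\<lambda>(t, \<omega>). (\<tau> t, \<theta> (\<kappa> t) \<omega>)))
          \<and> (AE x in \<mu> \<Otimes>\<^sub>M P. G x = real_cond_exp (\<mu> \<Otimes>\<^sub>M P)
                (invariant_sigma (\<mu> \<Otimes>\<^sub>M P) (\<lambda>(t, \<omega>). (\<tau> t, \<theta> (\<kappa> t) \<omega>))) F x)
          \<and> (AE \<omega> in P. (\<lambda>n. SUP t. ereal \<bar>erg_avg F \<tau> \<theta> \<kappa> n t \<omega> - G (t, \<omega>)\<bar>)
                \<longlonglongrightarrow> 0)"
  proof -
  interpret Ctx P K \<theta> \<mu> \<tau> \<kappa> F
    by (rule Ctx.intro) (fact assms)+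
  show ?thesis using main[OF equicont] unfolding S_def .
qed

end
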